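(* For every $\lambda\in\mathbb C$ and every integer $d>1$ there exists a real matrix $M$ with all entries non-negative whose Jordan decomposition contains a Jordan block with eigenvalue $\lambda$ of size $d$. *)

theory Defs
  imports Complex_Main "Jordan_Normal_Form.Jordan_Normal_Form"
begin

end

theory Submission
  imports Defs "Jordan_Normal_Form.Jordan_Normal_Form_Existence"
begin

lemma blk_sim1:
  fixes X Y :: "complex mat"
  assumes X: "X \<in> carrier_mat n n" and Y: "Y \<in> carrier_mat n n"
  shows "similar_mat (four_block_mat X Y Y X) (four_block_mat (X + Y) (0\<^sub>m n n) (0\<^sub>m n n) (X - Y))"
proof -
  let ?I = "1\<^sub>m n :: complex mat"
  define P where "P = four_block_mat ?I ?I ?I ((-1) \<cdot>\<^sub>m ?I)"
  define Q where "Q = four_block_mat ((1/2) \<cdot>\<^sub>m ?I) ((1/2) \<cdot>\<^sub>m ?I) ((1/2) \<cdot>\<^sub>m ?I) ((-1/2) \<cdot>\<^sub>m ?I)"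
  have c: "?I \<in> carrier_mat n n" "X + Y \<in> carrier_mat n n" "X - Y \<in> carrier_mat n n"
     "\<And>c. c \<cdot>\<^sub>m ?I \<in> carrier_mat n n" using X Y by auto
  have PQ: "P * Q = 1\<^sub>m (n+n)" unfolding P_def Q_def
    by (subst mult_four_block_mat[OF c(1) c(1) c(1) c(4) c(4) c(4) c(4) c(4)],
        rule eq_matI, auto)
  have QP: "Q * P = 1\<^sub>m (n+n)" unfolding P_def Q_def
    by (subst mult_four_block_mat[OF c(4) c(4) c(4) c(4) c(1) c(1) c(1) c(4)],
        rule eq_matI, auto)
  have PB: "P * four_block_mat (X + Y) (0\<^sub>m n n) (0\<^sub>m n n) (X - Y) = four_block_mat (X+Y) (X-Y) (X+Y) ((-1) \<cdot>\<^sub>m (X-Y))"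
    unfolding P_def
    by (subst mult_four_block_mat[OF c(1) c(1) c(1) c(4) c(2) _ _ c(3)], auto simp: mult_smult_assoc_mat[OF c(1) c(3)] left_mult_one_mat[OF c(2)] left_mult_one_mat[OF c(3)] left_add_zero_mat[OF c(2)] left_add_zero_mat[OF c(3)] right_add_zero_mat[OF c(2)] left_add_zero_mat[OF smult_carrier_mat[OF c(3)]])
  have e: "four_block_mat X Y Y X = P * four_block_mat (X + Y) (0\<^sub>m n n) (0\<^sub>m n n) (X - Y) * Q"
    unfolding PB Q_def
    by (subst mult_four_block_mat[OF c(2) c(3) c(2) _ c(4) c(4) c(4) c(4)], use c in force,
        rule eq_matI, insert X Y, auto simp: mult_smult_distrib[OF _ c(1)] algebra_simps)
  show ?thesis
    by (rule similar_matI[OF _ PQ QP e], insert X Y c, auto simp: P_def Q_def)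
qed

lemma blk_sim2:
  fixes X :: "complex mat" and c :: complex
  assumes X: "X \<in> carrier_mat n n"
  shows "similar_mat (four_block_mat X ((-c) \<cdot>\<^sub>m 1\<^sub>m n) (c \<cdot>\<^sub>m 1\<^sub>m n) X)
     (four_block_mat (X + (\<i>*c) \<cdot>\<^sub>m 1\<^sub>m n) (0\<^sub>m n n) (0\<^sub>m n n) (X + (-\<i>*c) \<cdot>\<^sub>m 1\<^sub>m n))"
proof -
  let ?I = "1\<^sub>m n :: complex mat"
  define U where "U = X + (\<i>*c) \<cdot>\<^sub>m ?I"
  define V where "V = X + (-\<i>*c) \<cdot>\<^sub>m ?I"
  define P where "P = four_block_mat ?I ?I ((-\<i>) \<cdot>\<^sub>m ?I) (\<i> \<cdot>\<^sub>m ?I)"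
  define Q where "Q = four_block_mat ((1/2) \<cdot>\<^sub>m ?I) ((\<i>/2) \<cdot>\<^sub>m ?I) ((1/2) \<cdot>\<^sub>m ?I) ((-\<i>/2) \<cdot>\<^sub>m ?I)"
  have c: "?I \<in> carrier_mat n n" "U \<in> carrier_mat n n" "V \<in> carrier_mat n n"
     "\<And>c. c \<cdot>\<^sub>m ?I \<in> carrier_mat n n" using X by (auto simp: U_def V_def)
  have PQ: "P * Q = 1\<^sub>m (n+n)" unfolding P_def Q_def
    by (subst mult_four_block_mat[OF c(1) c(1) c(4) c(4) c(4) c(4) c(4) c(4)],
        rule eq_matI, auto simp: field_simps)
  have QP: "Q * P = 1\<^sub>m (n+n)" unfolding P_def Q_def
    by (subst mult_four_block_mat[OF c(4) c(4) c(4) c(4) c(1) c(1) c(4) c(4)],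
        rule eq_matI, auto simp: field_simps)
  have PB: "P * four_block_mat U (0\<^sub>m n n) (0\<^sub>m n n) V = four_block_mat U V ((-\<i>) \<cdot>\<^sub>m U) (\<i> \<cdot>\<^sub>m V)"
    unfolding P_def
    by (subst mult_four_block_mat[OF c(1) c(1) c(4) c(4) c(2) _ _ c(3)], auto simp: mult_smult_assoc_mat[OF c(1) c(2)] mult_smult_assoc_mat[OF c(1) c(3)] left_mult_one_mat[OF c(2)] left_mult_one_mat[OF c(3)] left_add_zero_mat[OF c(3)] right_add_zero_mat[OF c(2)] left_add_zero_mat[OF smult_carrier_mat[OF c(3)]] right_add_zero_mat[OF smult_carrier_mat[OF c(2)]])
  have e: "four_block_mat X ((-c) \<cdot>\<^sub>m 1\<^sub>m n) (c \<cdot>\<^sub>m 1\<^sub>m n) X = P * four_block_mat U (0\<^sub>m n n) (0\<^sub>m n n) V * Q"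
    unfolding PB Q_def
    by (subst mult_four_block_mat[OF c(2) c(3) _ _ c(4) c(4) c(4) c(4)], use c in force, use c in force,
        rule eq_matI, insert X, auto simp: mult_smult_distrib[OF _ c(1)] mult_smult_assoc_mat[OF _ c(1)] U_def V_def field_simps)
  show ?thesis unfolding U_def[symmetric] V_def[symmetric]
    by (rule similar_matI[OF _ PQ QP e], insert X c, auto simp: P_def Q_def)
qed


lemma pn1[simp]: "complex_of_real (max x 0) - complex_of_real (max (-x) 0) = complex_of_real x"
  by (simp add: max_def)
lemma pn2[simp]: "complex_of_real (max (-x) 0) - complex_of_real (max x 0) = - complex_of_real x"
  by (simp add: max_def)

theorem lemma8:
  fixes lam :: complex and d :: nat
  assumes "d > 1"
  shows "\<exists>(n::nat) (M::real mat). M \<in> carrier_mat n n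
           \<and> (\<forall>i<n. \<forall>j<n. M $$ (i,j) \<ge> 0)
           \<and> (\<exists>n_as. jordan_nf (map_mat complex_of_real M) n_as \<and> (d, lam) \<in> set n_as)"
proof -
  define a where "a = Re lam"
  define b where "b = Im lam"
  define Rr :: "real mat" where "Rr = four_block_mat (jordan_block d a) ((-b) \<cdot>\<^sub>m 1\<^sub>m d) (b \<cdot>\<^sub>m 1\<^sub>m d) (jordan_block d a)"
  define Rp where "Rp = map_mat (\<lambda>x. max x 0) Rr"
  define Rn where "Rn = map_mat (\<lambda>x. max (-x) 0) Rr"
  define M where "M = four_block_mat Rp Rn Rn Rp"
  have Rr: "Rr \<in> carrier_mat (d+d) (d+d)" unfolding Rr_def by auto
  have Rp: "Rp \<in> carrier_mat (d+d) (d+d)" and Rn: "Rn \<in> carrier_mat (d+d) (d+d)"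
    using Rr by (auto simp: Rp_def Rn_def)
  have M: "M \<in> carrier_mat ((d+d)+(d+d)) ((d+d)+(d+d))" unfolding M_def using Rp Rn by auto
  have nonneg: "\<forall>i<(d+d)+(d+d). \<forall>j<(d+d)+(d+d). M $$ (i,j) \<ge> 0"
    using Rp Rn by (auto simp: M_def Rp_def Rn_def)
  let ?c = "map_mat complex_of_real"
  have cRp: "?c Rp \<in> carrier_mat (d+d) (d+d)" and cRn: "?c Rn \<in> carrier_mat (d+d) (d+d)"
    using Rp Rn by auto
  have cM: "?c M = four_block_mat (?c Rp) (?c Rn) (?c Rn) (?c Rp)"
    unfolding M_def by (rule map_four_block_mat[OF Rp Rn Rn Rp])
  define X where "X = jordan_block d (complex_of_real a)"
  have X: "X \<in> carrier_mat d d" unfolding X_def by auto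
  have diff: "?c Rp - ?c Rn = four_block_mat X ((- complex_of_real b) \<cdot>\<^sub>m 1\<^sub>m d) (complex_of_real b \<cdot>\<^sub>m 1\<^sub>m d) X"
    by (rule eq_matI, insert Rp Rn Rr, auto simp: Rp_def Rn_def Rr_def X_def)
  define S where "S = ?c Rp + ?c Rn"
  have S: "S \<in> carrier_mat (d+d) (d+d)" unfolding S_def using cRp cRn by auto
  define J1 where "J1 = jordan_block d lam"
  define J2 where "J2 = jordan_block d (cnj lam)"
  have J1: "X + (\<i> * complex_of_real b) \<cdot>\<^sub>m 1\<^sub>m d = J1"
    by (rule eq_matI, auto simp: X_def J1_def a_def b_def complex_eq_iff)
  have J2: "X + (- \<i> * complex_of_real b) \<cdot>\<^sub>m 1\<^sub>m d = J2"
    by (rule eq_matI, auto simp: X_def J2_def a_def b_def complex_eq_iff)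
  have sim1: "similar_mat (?c M) (four_block_mat S (0\<^sub>m (d+d) (d+d)) (0\<^sub>m (d+d) (d+d)) (four_block_mat X ((- complex_of_real b) \<cdot>\<^sub>m 1\<^sub>m d) (complex_of_real b \<cdot>\<^sub>m 1\<^sub>m d) X))"
    unfolding cM S_def diff[symmetric] by (rule blk_sim1[OF cRp cRn])
  have sim2: "similar_mat (four_block_mat X ((- complex_of_real b) \<cdot>\<^sub>m 1\<^sub>m d) (complex_of_real b \<cdot>\<^sub>m 1\<^sub>m d) X)
     (four_block_mat J1 (0\<^sub>m d d) (0\<^sub>m d d) J2)"
    using blk_sim2[OF X, of "complex_of_real b"] unfolding J1 J2 .
  have Xc: "four_block_mat X ((- complex_of_real b) \<cdot>\<^sub>m 1\<^sub>m d) (complex_of_real b \<cdot>\<^sub>m 1\<^sub>m d) X \<in> carrier_mat (d+d) (d+d)"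
    using X by auto
  have sim3: "similar_mat (?c M) (four_block_mat S (0\<^sub>m (d+d) (d+d)) (0\<^sub>m (d+d) (d+d)) (four_block_mat J1 (0\<^sub>m d d) (0\<^sub>m d d) J2))"
    by (rule similar_mat_trans[OF sim1 similar_mat_four_block_0_0[OF similar_mat_refl[OF S] sim2 S Xc]])
  from char_poly_factorized[OF S] obtain as where "char_poly S = (\<Prod> a \<leftarrow> as. [:- a, 1:])" by auto
  from jordan_nf_exists[OF S this] obtain n1 where n1: "jordan_nf S n1" by auto
  have d0: "d \<noteq> 0" using assms by auto
  have jJ1: "jordan_nf J1 [(d,lam)]"
  proof -
    have "jordan_matrix [(d,lam)] = J1"
      by (simp only: jordan_matrix_def J1_def list.map prod.case diag_block_mat_singleton)
    note e = this
    have c: "J1 \<in> carrier_mat d d" by (simp add: J1_def)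
    show ?thesis unfolding jordan_nf_def e using d0 similar_mat_refl[OF c] by simp
  qed
  have jJ2: "jordan_nf J2 [(d,cnj lam)]"
  proof -
    have "jordan_matrix [(d,cnj lam)] = J2"
      by (simp only: jordan_matrix_def J2_def list.map prod.case diag_block_mat_singleton)
    note e = this
    have c: "J2 \<in> carrier_mat d d" by (simp add: J2_def)
    show ?thesis unfolding jordan_nf_def e using d0 similar_mat_refl[OF c] by simp
  qed
  have jall: "jordan_nf (diag_block_mat (map fst [(S,n1),(J1,[(d,lam)]),(J2,[(d,cnj lam)])]))
     (concat (map snd [(S,n1),(J1,[(d,lam)]),(J2,[(d,cnj lam)])]))"
    by (rule jordan_nf_diag_block_mat, insert n1 jJ1 jJ2, auto)
  have eqd: "diag_block_mat (map fst [(S,n1),(J1,[(d,lam)]),(J2,[(d,cnj lam)])]) =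
     four_block_mat S (0\<^sub>m (d+d) (d+d)) (0\<^sub>m (d+d) (d+d)) (four_block_mat J1 (0\<^sub>m d d) (0\<^sub>m d d) J2)"
    using S by (auto simp: Let_def J1_def J2_def)
  have "jordan_nf (?c M) (n1 @ [(d,lam),(d,cnj lam)])"
    using jall sim3 unfolding eqd jordan_nf_def by (auto intro: similar_mat_trans)
  hence ex: "\<exists>n_as. jordan_nf (?c M) n_as \<and> (d, lam) \<in> set n_as"
    by (intro exI[of _ "n1 @ [(d,lam),(d,cnj lam)]"] conjI, simp_all)
  show ?thesis
    by (rule exI[of _ "(d+d)+(d+d)"], rule exI[of _ M], intro conjI M nonneg ex)
qed

end
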